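(* Let $X=\mathcal{X}(\mathfrak{D})$ be a $\mathbb{Q}$-Gorenstein Fano cone singularity given by a proper polyhedral divisor $\mathfrak{D}$ on $\mathbb{P}^1$ with tail cone $\sigma$, and let $n=\dim X$. Then for every $y\in\mathbb{P}^1$ and every $\xi$ in the interior of $\sigma$, the volume of $(X,\xi)$ equals the volume of the affine toric variety $X_{\sigma_y}$ at $(\xi,0)\in N_\mathbb{R}\times\mathbb{R}$; equivalently, $\mathrm{vol}_X(\xi)$ equals (with the same dimensional normalisation as in the toric case) the volume of the polytope $\sigma_y^\vee((\xi,0))=\{w\in\sigma_y^\vee : \langle w,(\xi,0)\rangle\le 1\}$ with respect to the lattice $M\times\mathbb{Z}$.
   Context: Let $T$ be an algebraic torus with character lattice $M$, cocharacter lattice $N$, pairing $\langle\cdot,\cdot\rangle$, and vector spaces $M_\mathbb{R},N_\mathbb{R}$. Let $\sigma\subset N_\mathbb{R}$ be a full-dimensional pointed rational polyhedral cone. A polyhedral divisor on $\mathbb{P}^1$ with tail cone $\sigma$ is a formal sum $\mathfrak{D}=\sum_{y\in\mathbb{P}^1}\mathfrak{D}_y\cdot y$ where each $\mathfrak{D}_y\subset N_\mathbb{R}$ is a polyhedron with rational vertices and recession cone $\sigma$, and $\mathfrak{D}_y=\sigma$ for all but finitely many $y$. Its degree is the Minkowski sum $\deg\mathfrak{D}=\sum_y\mathfrak{D}_y$; $\mathfrak{D}$ is proper if $\deg\mathfrak{D}\subsetneq\sigma$. For $u\in\sigma^\vee\cap M$ put $\mathfrak{D}(u)=\sum_y(\min_{v\in\mathfrak{D}_y}\langle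 u,v\rangle)\cdot y$. The affine variety $\mathcal{X}(\mathfrak{D})=\mathrm{Spec}\bigoplus_{u\in\sigma^\vee\cap M}H^0(\mathbb{P}^1,\mathcal{O}(\lfloor\mathfrak{D}(u)\rfloor))$ carries the $T$-action from the $M$-grading; its Reeb cone is the interior of $\sigma$. For $y\in\mathbb{P}^1$ define the cone $\sigma_y=\mathrm{pos}\big((\sigma\times\{0\})\cup(\mathfrak{D}_y\times\{1\})\cup((\textstyle\sum_{z\ne y}\mathfrak{D}_z)\times\{-1\})\big)\subset N_\mathbb{R}\times\mathbb{R}$, and $X_{\sigma_y}$ the associated affine toric variety with torus having cocharacter lattice $N\times\mathbb{Z}$. For a cone singularity with grading $\mathbb{C}[X]=\bigoplus R_u$ and Reeb field $\xi$, the index character is $F(\xi,t)=\sum_u e^{-t\langle u,\xi\rangle}\dim R_u$, with expansion $F(\xi,t)=\frac{a_0(\xi)(n-1)!}{t^n}+\frac{a_1(\xi)(n-2)!}{t^{n-1}}+O(t^{2-n})$; the volume is $\mathrm{vol}_X(\xi)=a_0(\xi)$. For a toric cone singularity with cone $\sigma$ this volume is proportional, by a constant depending only on $n$, to the volume of $\sigma^\vee(\xi)=\{u\in\sigma^\vee:\langle u,\xi\rangle\le1\}$. *)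

theory Defs
  imports "HOL-Analysis.Analysis"
begin

text \<open>Lattices: M = N = Z^r inside real^'r; the pairing is the inner product.
  Points of P^1 are modelled by complex option (None = infinity).\<close>

definition int_vec :: "real^'r \<Rightarrow> bool" where
  "int_vec x \<longleftrightarrow> (\<forall>i. x $ i \<in> \<int>)"

definition rat_vec :: "real^'r \<Rightarrow> bool" where
  "rat_vec x \<longleftrightarrow> (\<forall>i. x $ i \<in> \<rat>)"

definition pointed_rat_cone :: "(real^'r) set \<Rightarrow> bool" where
  "pointed_rat_cone \<sigma> \<longleftrightarrow>
     (\<exists>S. finite S \<and> (\<forall>x\<in>S. int_vec x) \<and> \<sigma> = convex_cone hull S)
     \<and> interior \<sigma> \<noteq> {} \<and> \<sigma> \<inter> uminus ` \<sigma> = {0}"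

definition polyhedron_with_tail :: "(real^'r) set \<Rightarrow> (real^'r) set \<Rightarrow> bool" where
  "polyhedron_with_tail P \<sigma> \<longleftrightarrow>
     (\<exists>V. finite V \<and> V \<noteq> {} \<and> (\<forall>v\<in>V. rat_vec v) \<and>
          P = {p + q | p q. p \<in> convex hull V \<and> q \<in> \<sigma>})"

definition supp_pd :: "(real^'r) set \<Rightarrow> (complex option \<Rightarrow> (real^'r) set) \<Rightarrow> complex option set" where
  "supp_pd \<sigma> D = {y. D y \<noteq> \<sigma>}"

definition polyhedral_divisor :: "(real^'r) set \<Rightarrow> (complex option \<Rightarrow> (real^'r) set) \<Rightarrow> bool" where
  "polyhedral_divisor \<sigma> D \<longleftrightarrow> pointed_rat_cone \<sigma> \<and>
     (\<forall>y. polyhedron_with_tail (D y) \<sigma>) \<and> finite (supp_pd \<sigma> D)"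

text \<open>Minkowski sum of the D_y for y in T (all other summands are sigma, and sigma+sigma=sigma).\<close>
definition msum_pd :: "(real^'r) set \<Rightarrow> (complex option \<Rightarrow> (real^'r) set) \<Rightarrow> complex option set \<Rightarrow> (real^'r) set" where
  "msum_pd \<sigma> D T = {v + (\<Sum>y\<in>supp_pd \<sigma> D \<inter> T. f y) | v f.
      v \<in> \<sigma> \<and> (\<forall>y\<in>supp_pd \<sigma> D \<inter> T. f y \<in> D y)}"

definition deg_pd :: "(real^'r) set \<Rightarrow> (complex option \<Rightarrow> (real^'r) set) \<Rightarrow> (real^'r) set" where
  "deg_pd \<sigma> D = msum_pd \<sigma> D UNIV"

definition proper_pd :: "(real^'r) set \<Rightarrow> (complex option \<Rightarrow> (real^'r) set) \<Rightarrow> bool" where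
  "proper_pd \<sigma> D \<longleftrightarrow> deg_pd \<sigma> D \<subset> \<sigma>"

definition dual_cone :: "'a::real_inner set \<Rightarrow> 'a set" where
  "dual_cone \<sigma> = {u. \<forall>v\<in>\<sigma>. 0 \<le> inner u v}"

definition hfun :: "(real^'r) set \<Rightarrow> real^'r \<Rightarrow> real" where
  "hfun P u = Inf ((\<lambda>v. inner u v) ` P)"

text \<open>dim H^0(P^1, O(floor(D(u)))) = max(0, deg floor(D(u)) + 1) on P^1;
  points outside the support contribute floor(min_sigma <u,.>) = 0.\<close>
definition dimR :: "(real^'r) set \<Rightarrow> (complex option \<Rightarrow> (real^'r) set) \<Rightarrow> real^'r \<Rightarrow> nat" where
  "dimR \<sigma> D u = nat ((\<Sum>y\<in>supp_pd \<sigma> D. \<lfloor>hfun (D y) u\<rfloor>) + 1)"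

definition lattice_M :: "(real^'r) set" where
  "lattice_M = {u. int_vec u}"

definition index_char_X :: "(real^'r) set \<Rightarrow> (complex option \<Rightarrow> (real^'r) set) \<Rightarrow> real^'r \<Rightarrow> real \<Rightarrow> real" where
  "index_char_X \<sigma> D \<xi> t =
     infsum (\<lambda>u. real (dimR \<sigma> D u) * exp (- t * inner u \<xi>)) (dual_cone \<sigma> \<inter> lattice_M)"

definition sigma_y :: "(real^'r) set \<Rightarrow> (complex option \<Rightarrow> (real^'r) set) \<Rightarrow> complex option \<Rightarrow> ((real^'r) \<times> real) set" where
  "sigma_y \<sigma> D y = convex_cone hull
     ((\<lambda>v. (v, 0)) ` \<sigma> \<union> (\<lambda>v. (v, 1)) ` D y \<union> (\<lambda>v. (v, -1)) ` msum_pd \<sigma> D (- {y}))"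

definition lattice_MZ :: "((real^'r) \<times> real) set" where
  "lattice_MZ = {w. int_vec (fst w) \<and> snd w \<in> \<int>}"

text \<open>Index character of the affine toric variety with cone tau (all graded pieces 1-dim).\<close>
definition index_char_toric :: "((real^'r) \<times> real) set \<Rightarrow> (real^'r) \<times> real \<Rightarrow> real \<Rightarrow> real" where
  "index_char_toric \<tau> \<xi> t = infsum (\<lambda>w. exp (- t * inner w \<xi>)) (dual_cone \<tau> \<inter> lattice_MZ)"

end

theory Submission
  imports Defs "HOL-Probability.Distributions"
begin
lemma exp_tail:
  fixes s :: real
  shows "(\<integral>\<^sup>+r. ennreal (exp (-r)) * indicator {s..} r \<partial>lborel) = ennreal (exp (-s))"
proof -
  have "(\<integral>\<^sup>+r. ennreal (exp (-r)) * indicator {s..} r \<partial>lborel) = ennreal (0 - (- exp (-s)))"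
    apply (rule nn_integral_FTC_atLeast[where F="\<lambda>x. - exp (-x)" and f="\<lambda>x. exp (-x)"])
    apply (auto intro!: derivative_eq_intros)
    apply real_asymp
    done
  then show ?thesis by simp
qed

lemma layer_cake_exp:
  fixes \<phi> :: "'a::euclidean_space \<Rightarrow> real" and A :: "'a set"
  assumes A: "A \<in> sets borel" and phi: "\<phi> \<in> borel_measurable borel"
    and nn: "\<And>y. y \<in> A \<Longrightarrow> 0 \<le> \<phi> y"
  shows "(\<integral>\<^sup>+y. ennreal (exp (- \<phi> y)) * indicator A y \<partial>lborel)
       = (\<integral>\<^sup>+r. ennreal (exp (-r)) * emeasure lborel {y\<in>A. \<phi> y \<le> r} \<partial>lborel)"
proof -
  have "(\<integral>\<^sup>+y. ennreal (exp (- \<phi> y)) * indicator A y \<partial>lborel)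
      = (\<integral>\<^sup>+y. (\<integral>\<^sup>+r. ennreal (exp (-r)) * indicator {(y,r). y \<in> A \<and> \<phi> y \<le> r} (y,r) \<partial>lborel) \<partial>lborel)"
  proof (rule nn_integral_cong)
    fix y :: 'a
    show "ennreal (exp (- \<phi> y)) * indicator A y
        = (\<integral>\<^sup>+r. ennreal (exp (-r)) * indicator {(y,r). y \<in> A \<and> \<phi> y \<le> r} (y,r) \<partial>lborel)"
    proof (cases "y \<in> A")
      case True
      have "(\<integral>\<^sup>+r. ennreal (exp (-r)) * indicator {(y,r). y \<in> A \<and> \<phi> y \<le> r} (y,r) \<partial>lborel)
          = (\<integral>\<^sup>+r. ennreal (exp (-r)) * indicator {\<phi> y..} r \<partial>lborel)"
        using True by (intro nn_integral_cong) (auto split: split_indicator)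
      then show ?thesis using True exp_tail by simp
    next
      case False
      then show ?thesis by (simp add: indicator_def)
    qed
  qed
  also have "\<dots> = (\<integral>\<^sup>+r. (\<integral>\<^sup>+y. ennreal (exp (-r)) * indicator {(y,r). y \<in> A \<and> \<phi> y \<le> r} (y,r) \<partial>lborel) \<partial>lborel)"
  proof -
    have S: "{(y,r). y \<in> A \<and> \<phi> y \<le> r} \<in> sets (lborel \<Otimes>\<^sub>M lborel)"
    proof -
      have "{(y,r). y \<in> A \<and> \<phi> y \<le> r} = (A \<times> UNIV) \<inter> {p. \<phi> (fst p) \<le> snd p}" by auto
      moreover have "{p::'a\<times>real. \<phi> (fst p) \<le> snd p} \<in> sets (lborel \<Otimes>\<^sub>M lborel)"
      proof -
        have "Measurable.pred (lborel \<Otimes>\<^sub>M lborel) (\<lambda>p::'a\<times>real. \<phi> (fst p) \<le> snd p)"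
          using phi by measurable
        then show ?thesis by (simp add: pred_def space_pair_measure)
      qed
      moreover have "A \<times> UNIV \<in> sets (lborel \<Otimes>\<^sub>M lborel)"
        using A by (auto intro!: pair_measureI)
      ultimately show ?thesis by auto
    qed
    show ?thesis
      apply (rule lborel_pair.Fubini'[symmetric])
      using S by measurable
  qed
  also have "\<dots> = (\<integral>\<^sup>+r. ennreal (exp (-r)) * emeasure lborel {y\<in>A. \<phi> y \<le> r} \<partial>lborel)"
  proof (rule nn_integral_cong)
    fix r :: real
    have "(\<integral>\<^sup>+y. ennreal (exp (-r)) * indicator {(y,r). y \<in> A \<and> \<phi> y \<le> r} (y,r) \<partial>lborel)
        = (\<integral>\<^sup>+y. ennreal (exp (-r)) * indicator {y\<in>A. \<phi> y \<le> r} y \<partial>lborel)"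
      by (intro nn_integral_cong) (auto split: split_indicator)
    also have "\<dots> = ennreal (exp (-r)) * emeasure lborel {y\<in>A. \<phi> y \<le> r}"
      by (rule nn_integral_cmult_indicator) (use A phi in measurable)
    finally show "(\<integral>\<^sup>+y. ennreal (exp (-r)) * indicator {(y,r). y \<in> A \<and> \<phi> y \<le> r} (y,r) \<partial>lborel)
        = ennreal (exp (-r)) * emeasure lborel {y\<in>A. \<phi> y \<le> r}" .
  qed
  finally show ?thesis .
qed

lemma cone_exp_nn_integral:
  fixes \<tau> :: "'a::euclidean_space set" and \<zeta> :: 'a
  assumes cl: "closed \<tau>" and cn: "cone \<tau>" and c: "0 < c"
    and bnd: "\<And>w. w \<in> \<tau> \<Longrightarrow> c * norm w \<le> inner w \<zeta>"
  shows "(\<integral>\<^sup>+y. ennreal (exp (- inner y \<zeta>)) * indicator \<tau> y \<partial>lborel)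
       = ennreal (fact DIM('a)) * emeasure lborel {w\<in>\<tau>. inner w \<zeta> \<le> 1}"
proof -
  let ?P = "{w\<in>\<tau>. inner w \<zeta> \<le> 1}"
  have Pb: "?P \<in> sets borel"
    using cl by measurable
  have nn: "\<And>y. y \<in> \<tau> \<Longrightarrow> 0 \<le> inner y \<zeta>"
    using bnd c by (meson mult_nonneg_nonneg norm_ge_zero order_trans less_imp_le)
  have "(\<integral>\<^sup>+y. ennreal (exp (- inner y \<zeta>)) * indicator \<tau> y \<partial>lborel)
      = (\<integral>\<^sup>+r. ennreal (exp (-r)) * emeasure lborel {y\<in>\<tau>. inner y \<zeta> \<le> r} \<partial>lborel)"
    by (rule layer_cake_exp) (use cl nn in auto)
  also have "\<dots> = (\<integral>\<^sup>+r. ennreal (r ^ DIM('a) * exp (-r)) * indicator {0..} r * emeasure lborel ?P \<partial>lborel)"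
  proof (rule nn_integral_cong)
    fix r :: real
    show "ennreal (exp (-r)) * emeasure lborel {y\<in>\<tau>. inner y \<zeta> \<le> r}
        = ennreal (r ^ DIM('a) * exp (-r)) * indicator {0..} r * emeasure lborel ?P"
    proof (cases "r > 0")
      case True
      have eq: "{y\<in>\<tau>. inner y \<zeta> \<le> r} = (\<lambda>x. r *\<^sub>R x + 0) ` ?P"
      proof (intro set_eqI iffI)
        fix y assume y: "y \<in> {y\<in>\<tau>. inner y \<zeta> \<le> r}"
        have "(1/r) *\<^sub>R y \<in> ?P"
          using y True cn by (auto simp: cone_def field_simps)
        moreover have "y = r *\<^sub>R ((1/r) *\<^sub>R y) + 0" using True by simp
        ultimately show "y \<in> (\<lambda>x. r *\<^sub>R x + 0) ` ?P" by blast
      next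
        fix y assume "y \<in> (\<lambda>x. r *\<^sub>R x + 0) ` ?P"
        then obtain x where x: "x \<in> ?P" "y = r *\<^sub>R x" by auto
        then show "y \<in> {y\<in>\<tau>. inner y \<zeta> \<le> r}"
          using True cn by (auto simp: cone_def intro: mult_left_le)
      qed
      have m1: "{y\<in>\<tau>. inner y \<zeta> \<le> r} \<in> sets borel"
        using cl by measurable
      have "emeasure lborel {y\<in>\<tau>. inner y \<zeta> \<le> r} = emeasure lebesgue {y\<in>\<tau>. inner y \<zeta> \<le> r}"
        using m1 by simp
      also have "\<dots> = \<bar>r\<bar> ^ DIM('a) * emeasure lebesgue ?P"
        unfolding eq by (rule emeasure_lebesgue_affine)
      also have "\<dots> = ennreal (r ^ DIM('a)) * emeasure lborel ?P"
        using Pb True by simp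
      finally have em: "emeasure lborel {y\<in>\<tau>. inner y \<zeta> \<le> r} = ennreal (r ^ DIM('a)) * emeasure lborel ?P" .
      have "ennreal (r ^ DIM('a) * exp (-r)) = ennreal (exp (-r)) * ennreal (r ^ DIM('a))"
        using True by (simp add: ennreal_mult mult.commute)
      then show ?thesis using True em by (simp add: mult.assoc)
    next
      case False
      have "emeasure lborel {y\<in>\<tau>. inner y \<zeta> \<le> r} = 0"
      proof -
        have "{y\<in>\<tau>. inner y \<zeta> \<le> r} \<subseteq> {0}"
        proof
          fix y assume y: "y \<in> {y\<in>\<tau>. inner y \<zeta> \<le> r}"
          then have "c * norm y \<le> 0" using bnd[of y] False by auto
          then show "y \<in> {0}" using c by (simp add: mult_le_0_iff)
        qed
        then have "emeasure lborel {y\<in>\<tau>. inner y \<zeta> \<le> r} \<le> emeasure lborel {0::'a}"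
          by (intro emeasure_mono) auto
        then show ?thesis by simp
      qed
      moreover have "r ^ DIM('a) * exp (-r) = 0 \<or> r < 0"
        using False by (cases "r = 0") auto
      ultimately show ?thesis by (auto simp: indicator_def)
    qed
  qed
  also have "\<dots> = (\<integral>\<^sup>+r. ennreal (r ^ DIM('a) * exp (-r)) * indicator {0..} r \<partial>lborel) * emeasure lborel ?P"
    by (rule nn_integral_multc) measurable
  also have "\<dots> = ennreal (fact DIM('a)) * emeasure lborel ?P"
    by (simp add: nn_intergal_power_times_exp_Ici)
  finally show ?thesis .
qed

lemma exp_norm_nn_integral_finite:
  fixes c :: real
  assumes c: "0 < c"
  shows "(\<integral>\<^sup>+y. ennreal (exp (- (c * norm (y::'a::euclidean_space)))) \<partial>lborel) < \<infinity>"
proof -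
  have "(\<integral>\<^sup>+y. ennreal (exp (- (c * norm (y::'a)))) \<partial>lborel)
      = (\<integral>\<^sup>+y. ennreal (exp (- (c * norm (y::'a)))) * indicator UNIV y \<partial>lborel)" by simp
  also have "\<dots> = (\<integral>\<^sup>+r. ennreal (exp (-r)) * emeasure lborel {y\<in>UNIV. c * norm (y::'a) \<le> r} \<partial>lborel)"
    by (rule layer_cake_exp) (use c in auto)
  also have "\<dots> \<le> (\<integral>\<^sup>+r. ennreal ((2/c) ^ DIM('a) * (r ^ DIM('a) * exp (-r))) * indicator {0..} r \<partial>lborel)"
  proof (rule nn_integral_mono)
    fix r :: real
    show "ennreal (exp (-r)) * emeasure lborel {y\<in>UNIV. c * norm (y::'a) \<le> r}
        \<le> ennreal ((2/c) ^ DIM('a) * (r ^ DIM('a) * exp (-r))) * indicator {0..} r"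
    proof (cases "r \<ge> 0")
      case True
      define R where "R = r / c"
      define v :: 'a where "v = (\<Sum>b\<in>Basis. R *\<^sub>R b)"
      have vb: "\<And>b. b \<in> Basis \<Longrightarrow> inner v b = R" unfolding v_def
        by (simp add: inner_sum_left inner_Basis if_distrib sum.If_cases)
      have sub: "{y\<in>UNIV. c * norm (y::'a) \<le> r} \<subseteq> cbox (-v) v"
      proof
        fix y :: 'a assume "y \<in> {y\<in>UNIV. c * norm (y::'a) \<le> r}"
        then have "norm y \<le> R" using c by (simp add: R_def field_simps)
        show "y \<in> cbox (-v) v"
          unfolding mem_box
        proof (intro ballI conjI)
          fix b :: 'a assume b: "b \<in> Basis"
          have "\<bar>inner y b\<bar> \<le> R" using Basis_le_norm[OF b, of y] \<open>norm y \<le> R\<close> by linarith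
          then show "inner (-v) b \<le> inner y b" "inner y b \<le> inner v b"
            using vb[OF b] by (auto simp: inner_minus_left)
        qed
      qed
      have "emeasure lborel {y\<in>UNIV. c * norm (y::'a) \<le> r} \<le> emeasure lborel (cbox (-v) v)"
        by (rule emeasure_mono[OF sub]) simp
      also have "\<dots> = ennreal ((2 * R) ^ DIM('a))"
      proof -
        have R0: "R \<ge> 0" using True c by (simp add: R_def)
        have "(\<Prod>b\<in>Basis. (v - - v) \<bullet> b) = (\<Prod>b\<in>(Basis::'a set). 2 * R)"
          by (rule prod.cong) (auto simp: vb inner_diff_left inner_minus_left inner_add_left)
        also have "\<dots> = (2 * R) ^ DIM('a)" by simp
        finally have pr: "(\<Prod>b\<in>Basis. (v - - v) \<bullet> b) = (2 * R) ^ DIM('a)" .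
        have le: "\<forall>b\<in>Basis. (- v) \<bullet> b \<le> v \<bullet> b" using R0 by (simp add: vb inner_minus_left)
        show ?thesis
          by (simp only: emeasure_lborel_cbox_eq if_P[OF le] pr)
      qed
      finally have le: "emeasure lborel {y\<in>UNIV. c * norm (y::'a) \<le> r} \<le> ennreal ((2 * R) ^ DIM('a))" .
      have "ennreal (exp (-r)) * emeasure lborel {y\<in>UNIV. c * norm (y::'a) \<le> r}
          \<le> ennreal (exp (-r)) * ennreal ((2 * R) ^ DIM('a))"
        by (intro mult_left_mono le) auto
      also have "\<dots> = ennreal ((2/c) ^ DIM('a) * (r ^ DIM('a) * exp (-r)))"
        using True c by (simp add: ennreal_mult'[symmetric] R_def power_mult_distrib power_divide field_simps)
      finally show ?thesis using True by simp
    next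
      case False
      then have "{y\<in>UNIV. c * norm (y::'a) \<le> r} = {}"
        using c by (auto simp: not_le) (metis le_less_trans mult_nonneg_nonneg norm_ge_zero less_eq_real_def not_le)
      then show ?thesis by simp
    qed
  qed
  also have "\<dots> = ennreal ((2/c) ^ DIM('a)) * (\<integral>\<^sup>+r. ennreal (r ^ DIM('a) * exp (-r)) * indicator {0..} r \<partial>lborel)"
    using c by (subst nn_integral_cmult[symmetric]) (auto simp: ennreal_mult' mult.assoc)
  also have "\<dots> < \<infinity>"
    by (simp add: nn_intergal_power_times_exp_Ici ennreal_mult_less_top)
  finally show ?thesis .
qed

definition latt :: "'a::euclidean_space set" where
  "latt = {x. \<forall>b\<in>Basis. inner x b \<in> \<int>}"

definition fl :: "real \<Rightarrow> 'a::euclidean_space \<Rightarrow> 'a" where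
  "fl t y = (\<Sum>b\<in>Basis. of_int \<lfloor>inner y b / t\<rfloor> *\<^sub>R b)"

lemma inner_fl: "b \<in> Basis \<Longrightarrow> inner (fl t y) b = of_int \<lfloor>inner y b / t\<rfloor>"
  by (simp add: fl_def inner_sum_left inner_Basis if_distrib sum.If_cases)

lemma fl_latt: "fl t y \<in> latt"
  by (simp add: latt_def inner_fl)

lemma fl_meas[measurable]: "fl t \<in> borel_measurable borel"
  unfolding fl_def by measurable

lemma fl_approx:
  fixes y :: "'a::euclidean_space" and t :: real
  assumes t: "0 < t"
  shows "norm (y - t *\<^sub>R fl t y) \<le> DIM('a) * t"
proof -
  have "norm (y - t *\<^sub>R fl t y) \<le> (\<Sum>b\<in>Basis. \<bar>inner (y - t *\<^sub>R fl t y) b\<bar>)"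
    by (rule norm_le_l1)
  also have "\<dots> \<le> of_nat (card (Basis::'a set)) * t"
  proof (rule sum_bounded_above)
    fix b :: 'a assume b: "b \<in> Basis"
    define x where "x = inner y b / t"
    have yb: "inner y b = t * x" using t by (simp add: x_def)
    have fb: "inner (fl t y) b = of_int \<lfloor>x\<rfloor>" using b by (simp add: inner_fl x_def)
    have e: "inner (y - t *\<^sub>R fl t y) b = t * (x - of_int \<lfloor>x\<rfloor>)"
      by (simp only: inner_diff_left inner_scaleR_left fb yb right_diff_distrib)
    have f1: "0 \<le> x - of_int \<lfloor>x\<rfloor>" "x - of_int \<lfloor>x\<rfloor> \<le> 1"
      using of_int_floor_le[of x] real_of_int_floor_add_one_gt[of x] by linarith+
    have "\<bar>t * (x - of_int \<lfloor>x\<rfloor>)\<bar> = t * (x - of_int \<lfloor>x\<rfloor>)"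
      using t f1 by simp
    also have "\<dots> \<le> t * 1" using t f1 by (intro mult_left_mono) auto
    finally show "\<bar>inner (y - t *\<^sub>R fl t y) b\<bar> \<le> t" using e by simp
  qed
  finally show ?thesis by simp
qed

lemma fl_eq_iff:
  assumes t: "0 < t" and w: "w \<in> latt"
  shows "fl t y = w \<longleftrightarrow> (\<forall>b\<in>Basis. t * inner w b \<le> inner y b \<and> inner y b < t * inner w b + t)"
proof -
  have "fl t y = w \<longleftrightarrow> (\<forall>b\<in>Basis. of_int \<lfloor>inner y b / t\<rfloor> = inner w b)"
    by (simp add: euclidean_eq_iff[of "fl t y"] inner_fl)
  also have "\<dots> \<longleftrightarrow> (\<forall>b\<in>Basis. t * inner w b \<le> inner y b \<and> inner y b < t * inner w b + t)"
  proof (intro ball_cong refl)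
    fix b :: 'a assume b: "b \<in> Basis"
    then obtain k where k: "inner w b = of_int k" using w by (auto simp: latt_def elim!: Ints_cases)
    have "(of_int \<lfloor>inner y b / t\<rfloor> = inner w b) \<longleftrightarrow> \<lfloor>inner y b / t\<rfloor> = k"
      using k by simp
    also have "\<dots> \<longleftrightarrow> of_int k \<le> inner y b / t \<and> inner y b / t < of_int k + 1"
      by (simp add: floor_eq_iff)
    also have "\<dots> \<longleftrightarrow> t * inner w b \<le> inner y b \<and> inner y b < t * inner w b + t"
      using t k by (simp add: field_simps)
    finally show "(of_int \<lfloor>inner y b / t\<rfloor> = inner w b) \<longleftrightarrow> t * inner w b \<le> inner y b \<and> inner y b < t * inner w b + t" .
  qed
  finally show ?thesis .
qed

lemma cell_sets: "{y. fl t y = (w::'a::euclidean_space)} \<in> sets lborel"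
proof -
  have "Measurable.pred borel (\<lambda>y::'a. fl t y = w)" by measurable
  then show ?thesis by (simp add: pred_def)
qed

lemma cell_emeasure:
  fixes t :: real
  assumes t: "0 < t" and w: "(w::'a::euclidean_space) \<in> latt"
  shows "emeasure lborel {y. fl t y = w} = ennreal (t ^ DIM('a))"
proof -
  define v :: 'a where "v = (\<Sum>b\<in>Basis. t *\<^sub>R b)"
  have vb: "\<And>b. b \<in> Basis \<Longrightarrow> inner v b = t" unfolding v_def
    by (simp add: inner_sum_left inner_Basis if_distrib sum.If_cases)
  have s1: "box (t *\<^sub>R w) (t *\<^sub>R w + v) \<subseteq> {y. fl t y = w}"
  proof
    fix x assume x: "x \<in> box (t *\<^sub>R w) (t *\<^sub>R w + v)"
    show "x \<in> {y. fl t y = w}"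
      unfolding mem_Collect_eq fl_eq_iff[OF t w]
    proof
      fix b :: 'a assume b: "b \<in> Basis"
      then have "t * inner w b < inner x b \<and> inner x b < t * inner w b + t"
        using x vb[OF b] by (auto simp: mem_box inner_add_left)
      then show "t * inner w b \<le> inner x b \<and> inner x b < t * inner w b + t" by auto
    qed
  qed
  have s2: "{y. fl t y = w} \<subseteq> cbox (t *\<^sub>R w) (t *\<^sub>R w + v)"
    using t w vb by (auto simp: fl_eq_iff mem_box inner_add_left less_imp_le)
  have "(\<Prod>b\<in>Basis. (t *\<^sub>R w + v - t *\<^sub>R w) \<bullet> b) = (\<Prod>b\<in>(Basis::'a set). t)"
    by (rule prod.cong) (auto simp: vb)
  also have "\<dots> = t ^ DIM('a)" by simp
  finally have pr: "(\<Prod>b\<in>Basis. (t *\<^sub>R w + v - t *\<^sub>R w) \<bullet> b) = t ^ DIM('a)" .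
  have le: "\<forall>b\<in>Basis. (t *\<^sub>R w) \<bullet> b \<le> (t *\<^sub>R w + v) \<bullet> b"
    using t vb by (simp add: inner_add_left)
  have e: "emeasure lborel (box (t *\<^sub>R w) (t *\<^sub>R w + v)) = ennreal (t ^ DIM('a))"
          "emeasure lborel (cbox (t *\<^sub>R w) (t *\<^sub>R w + v)) = ennreal (t ^ DIM('a))"
    by (simp_all only: emeasure_lborel_box_eq emeasure_lborel_cbox_eq if_P[OF le] pr)
  have "emeasure lborel (box (t *\<^sub>R w) (t *\<^sub>R w + v)) \<le> emeasure lborel {y. fl t y = w}"
    by (rule emeasure_mono[OF s1 cell_sets])
  moreover have "emeasure lborel {y. fl t y = w} \<le> emeasure lborel (cbox (t *\<^sub>R w) (t *\<^sub>R w + v))"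
    by (rule emeasure_mono[OF s2]) simp
  ultimately show ?thesis using e by (metis antisym)
qed

lemma cell_measure:
  fixes t :: real
  assumes t: "0 < t" and w: "(w::'a::euclidean_space) \<in> latt"
  shows "measure lborel {y. fl t y = w} = t ^ DIM('a)"
  using cell_emeasure[OF assms] t by (simp add: measure_def)

definition gfun :: "'a::euclidean_space set \<Rightarrow> 'a \<Rightarrow> real \<Rightarrow> 'a \<Rightarrow> real" where
  "gfun \<tau> \<zeta> t y = indicator \<tau> (fl t y) * exp (- t * inner (fl t y) \<zeta>)"

lemma cut_sets_aux:
  fixes t :: real
  shows "finite F \<Longrightarrow> {y::'a::euclidean_space. fl t y \<in> F} \<in> sets lborel"
proof -
  assume "finite F"
  then have [measurable]: "F \<in> sets borel" by (simp add: borel_closed finite_imp_closed)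
  have "Measurable.pred borel (\<lambda>y::'a. fl t y \<in> F)" by measurable
  then show ?thesis by (simp add: pred_def)
qed


context
  fixes \<tau> :: "'a::euclidean_space set" and \<zeta> :: 'a and c :: real
  assumes cl: "closed \<tau>" and cvx: "convex \<tau>" and cn: "cone \<tau>" and c: "0 < c"
    and bnd: "\<And>w. w \<in> \<tau> \<Longrightarrow> c * norm w \<le> inner w \<zeta>"
begin

lemma tau_borel[measurable]: "\<tau> \<in> sets borel"
  using cl by (simp add: borel_closed)

lemma g_meas[measurable]: "gfun \<tau> \<zeta> t \<in> borel_measurable borel"
  unfolding gfun_def by measurable

lemma g_nonneg: "0 \<le> gfun \<tau> \<zeta> t y"
  by (simp add: gfun_def)

lemma g_bound:
  assumes t: "0 < t"
  shows "gfun \<tau> \<zeta> t y \<le> exp (c * DIM('a) * t) * exp (- (c * norm y))"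
proof (cases "fl t y \<in> \<tau>")
  case True
  let ?z = "t *\<^sub>R fl t y"
  have z: "?z \<in> \<tau>" using True cn t by (simp add: cone_def)
  have ny: "norm y \<le> norm ?z + DIM('a) * t"
    using fl_approx[OF t, of y] norm_triangle_sub[of y ?z] by linarith
  have "- t * inner (fl t y) \<zeta> = - inner ?z \<zeta>" by simp
  also have "\<dots> \<le> - (c * norm ?z)" using bnd[OF z] by simp
  also have "\<dots> \<le> c * DIM('a) * t - c * norm y"
  proof -
    have "c * norm y \<le> c * (norm ?z + DIM('a) * t)"
      using ny c by (intro mult_left_mono) auto
    then show ?thesis by (simp add: algebra_simps)
  qed
  finally have "exp (- t * inner (fl t y) \<zeta>) \<le> exp (c * DIM('a) * t - c * norm y)"
    by simp
  then show ?thesis using True by (simp add: gfun_def exp_diff exp_minus field_simps)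
next
  case False
  then show ?thesis by (simp add: gfun_def)
qed

lemma W_integrable: "integrable lborel (\<lambda>y. exp (c * DIM('a) * t) * exp (- (c * norm (y::'a))))"
proof -
  have "integrable lborel (\<lambda>y. exp (- (c * norm (y::'a))))"
    by (rule integrableI_bounded) (use exp_norm_nn_integral_finite[OF c] in auto)
  then show ?thesis by simp
qed

lemma g_integrable:
  assumes t: "0 < t"
  shows "integrable lborel (gfun \<tau> \<zeta> t)"
  by (rule Bochner_Integration.integrable_bound[OF W_integrable[of t]])
     (use g_bound[OF t] g_nonneg in \<open>auto intro!: AE_I2\<close>)

lemma g_cut_integral:
  assumes t: "0 < t" and F: "finite F" "F \<subseteq> \<tau> \<inter> latt"
  shows "integral\<^sup>L lborel (\<lambda>y. gfun \<tau> \<zeta> t y * indicator {y. fl t y \<in> F} y)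
       = t ^ DIM('a) * (\<Sum>w\<in>F. exp (- t * inner w \<zeta>))"
proof -
  have eq: "(\<lambda>y. gfun \<tau> \<zeta> t y * indicator {y. fl t y \<in> F} y)
      = (\<lambda>y. \<Sum>w\<in>F. exp (- t * inner w \<zeta>) * indicator {y. fl t y = w} y)"
  proof
    fix y
    show "gfun \<tau> \<zeta> t y * indicator {y. fl t y \<in> F} y
        = (\<Sum>w\<in>F. exp (- t * inner w \<zeta>) * indicator {y. fl t y = w} y)"
    proof (cases "fl t y \<in> F")
      case True
      then have "fl t y \<in> \<tau>" using F by auto
      then show ?thesis using True F
        by (simp add: gfun_def indicator_def if_distrib sum.delta' cong: if_cong)
    next
      case False
      then have "\<And>w. w \<in> F \<Longrightarrow> indicator {y. fl t y = w} y = (0::real)"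
        by (auto simp: indicator_def)
      then show ?thesis using False by simp
    qed
  qed
  have int: "\<And>w. w \<in> F \<Longrightarrow> integrable lborel (\<lambda>y. exp (- t * inner w \<zeta>) * indicator {y::'a. fl t y = w} y)"
  proof -
    fix w assume w: "w \<in> F"
    have "integrable lborel (indicator {y::'a. fl t y = w} :: 'a \<Rightarrow> real)"
      using cell_emeasure[OF t, of w] w F cell_sets[of t w] by (auto simp: integrable_indicator_iff)
    then show "integrable lborel (\<lambda>y. exp (- t * inner w \<zeta>) * indicator {y::'a. fl t y = w} y)"
      by simp
  qed
  have "integral\<^sup>L lborel (\<lambda>y. gfun \<tau> \<zeta> t y * indicator {y. fl t y \<in> F} y)
      = (\<Sum>w\<in>F. integral\<^sup>L lborel (\<lambda>y. exp (- t * inner w \<zeta>) * indicator {y::'a. fl t y = w} y))"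
    unfolding eq by (rule Bochner_Integration.integral_sum) (use int in auto)
  also have "\<dots> = (\<Sum>w\<in>F. exp (- t * inner w \<zeta>) * t ^ DIM('a))"
  proof (rule sum.cong[OF refl])
    fix w assume w: "w \<in> F"
    have "integral\<^sup>L lborel (indicator {y::'a. fl t y = w} :: 'a \<Rightarrow> real) = t ^ DIM('a)"
      using cell_measure[OF t, of w] w F by auto
    then show "integral\<^sup>L lborel (\<lambda>y. exp (- t * inner w \<zeta>) * indicator {y::'a. fl t y = w} y)
        = exp (- t * inner w \<zeta>) * t ^ DIM('a)"
      by simp
  qed
  also have "\<dots> = t ^ DIM('a) * (\<Sum>w\<in>F. exp (- t * inner w \<zeta>))"
    by (simp add: sum_distrib_left mult.commute)
  finally show ?thesis .
qed

end

context
  fixes \<tau> :: "'a::euclidean_space set" and \<zeta> :: 'a and c :: real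
  assumes cl: "closed \<tau>" and cvx: "convex \<tau>" and cn: "cone \<tau>" and c: "0 < c"
    and bnd: "\<And>w. w \<in> \<tau> \<Longrightarrow> c * norm w \<le> inner w \<zeta>"
begin

lemma finite_box_latt: "finite {w::'a. w \<in> latt \<and> (\<forall>b\<in>Basis. \<bar>inner w b\<bar> \<le> real N)}"
proof -
  let ?h = "\<lambda>f. (\<Sum>b\<in>Basis. of_int (f b) *\<^sub>R b) :: 'a"
  have "{w::'a. w \<in> latt \<and> (\<forall>b\<in>Basis. \<bar>inner w b\<bar> \<le> real N)}
      \<subseteq> ?h ` (Basis \<rightarrow>\<^sub>E {- int N..int N})"
  proof
    fix w :: 'a assume w: "w \<in> {w. w \<in> latt \<and> (\<forall>b\<in>Basis. \<bar>inner w b\<bar> \<le> real N)}"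
    have ib: "\<And>b. b \<in> Basis \<Longrightarrow> of_int \<lfloor>inner w b\<rfloor> = inner w b"
      using w by (auto simp: latt_def)
    have "w = ?h (restrict (\<lambda>b. \<lfloor>inner w b\<rfloor>) Basis)"
      by (subst euclidean_representation[symmetric, of w]) (auto intro!: sum.cong simp: ib)
    moreover have "restrict (\<lambda>b. \<lfloor>inner w b\<rfloor>) Basis \<in> Basis \<rightarrow>\<^sub>E {- int N..int N}"
    proof -
      have "\<And>b. b \<in> Basis \<Longrightarrow> \<lfloor>inner w b\<rfloor> \<in> {- int N..int N}"
      proof -
        fix b :: 'a assume b: "b \<in> Basis"
        then have "\<bar>of_int \<lfloor>inner w b\<rfloor>\<bar> \<le> real N" by (simp only: ib) (use w in auto)
        then show "\<lfloor>inner w b\<rfloor> \<in> {- int N..int N}" by auto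
      qed
      then show ?thesis by auto
    qed
    ultimately show "w \<in> ?h ` (Basis \<rightarrow>\<^sub>E {- int N..int N})" by blast
  qed
  moreover have "finite (?h ` (Basis \<rightarrow>\<^sub>E {- int N..int N}))"
    by (intro finite_imageI finite_PiE) auto
  ultimately show ?thesis by (rule finite_subset)
qed

lemma g_summable_integral:
  assumes t: "0 < t"
  shows "(\<lambda>w. exp (- t * inner w \<zeta>)) summable_on (\<tau> \<inter> latt)"
    and "t ^ DIM('a) * infsum (\<lambda>w. exp (- t * inner w \<zeta>)) (\<tau> \<inter> latt) = integral\<^sup>L lborel (gfun \<tau> \<zeta> t)"
proof -
  let ?E = "\<lambda>w. exp (- t * inner w \<zeta>)"
  let ?I = "integral\<^sup>L lborel (gfun \<tau> \<zeta> t)"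
  have gi: "integrable lborel (gfun \<tau> \<zeta> t)" by (rule g_integrable[OF cl cvx cn c bnd t])
  have tn: "0 < t ^ DIM('a)" using t by simp
  have cutint: "integrable lborel (\<lambda>y. gfun \<tau> \<zeta> t y * indicator {y. fl t y \<in> F} y)" if "finite F" for F
    by (rule integrable_real_mult_indicator[OF _ gi]) (use that cut_sets_aux in auto)
  have le: "t ^ DIM('a) * sum ?E F \<le> ?I" if F: "finite F" "F \<subseteq> \<tau> \<inter> latt" for F
  proof -
    have "t ^ DIM('a) * sum ?E F = integral\<^sup>L lborel (\<lambda>y. gfun \<tau> \<zeta> t y * indicator {y. fl t y \<in> F} y)"
      by (rule g_cut_integral[OF cl cvx cn c bnd t F, symmetric])
    also have "\<dots> \<le> ?I"
      by (rule integral_mono[OF cutint[OF F(1)] gi])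
         (auto simp: indicator_def g_nonneg[OF cl cvx cn c bnd])
    finally show ?thesis .
  qed
  have le2: "sum ?E F \<le> ?I / t ^ DIM('a)" if F: "finite F" "F \<subseteq> \<tau> \<inter> latt" for F
    using le[OF F] tn by (simp add: field_simps)
  show sm: "?E summable_on (\<tau> \<inter> latt)"
    by (rule nonneg_bdd_above_summable_on) (use le2 in \<open>auto simp: bdd_above_def\<close>)
  have up: "infsum ?E (\<tau> \<inter> latt) \<le> ?I / t ^ DIM('a)"
  proof -
    have "infsum ?E (\<tau> \<inter> latt) = (SUP F\<in>{F. finite F \<and> F \<subseteq> \<tau> \<inter> latt}. sum ?E F)"
      by (rule infsum_nonneg_is_SUPREMUM_real[OF sm]) simp
    also have "\<dots> \<le> ?I / t ^ DIM('a)"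
      by (rule cSUP_least) (use le2 in auto)
    finally show ?thesis .
  qed
  define FN where "FN N = {w \<in> \<tau> \<inter> latt. \<forall>b\<in>Basis. \<bar>inner w b\<bar> \<le> real N}" for N :: nat
  have FNfin: "finite (FN N)" for N
    by (rule finite_subset[OF _ finite_box_latt[of N]]) (auto simp: FN_def)
  have lim: "(\<lambda>N. integral\<^sup>L lborel (\<lambda>y. gfun \<tau> \<zeta> t y * indicator {y. fl t y \<in> FN N} y)) \<longlonglongrightarrow> ?I"
  proof (rule integral_dominated_convergence[where w="gfun \<tau> \<zeta> t"])
    show "gfun \<tau> \<zeta> t \<in> borel_measurable lborel" using g_meas[OF cl cvx cn c bnd] by simp
    show "(\<lambda>y. gfun \<tau> \<zeta> t y * indicator {y. fl t y \<in> FN N} y) \<in> borel_measurable lborel" for N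
      using cutint[OF FNfin[of N]] by auto
    show "integrable lborel (gfun \<tau> \<zeta> t)" by (rule gi)
    show "AE y in lborel. norm (gfun \<tau> \<zeta> t y * indicator {y. fl t y \<in> FN N} y) \<le> gfun \<tau> \<zeta> t y" for N
      by (rule AE_I2) (auto simp: indicator_def g_nonneg[OF cl cvx cn c bnd])
    show "AE y in lborel. (\<lambda>N. gfun \<tau> \<zeta> t y * indicator {y. fl t y \<in> FN N} y) \<longlonglongrightarrow> gfun \<tau> \<zeta> t y"
    proof (rule AE_I2)
      fix y :: 'a
      show "(\<lambda>N. gfun \<tau> \<zeta> t y * indicator {y. fl t y \<in> FN N} y) \<longlonglongrightarrow> gfun \<tau> \<zeta> t y"
      proof (cases "fl t y \<in> \<tau>")
        case True
        define N0 where "N0 = nat \<lceil>\<Sum>b\<in>Basis. \<bar>inner (fl t y) b\<bar>\<rceil>"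
        have "fl t y \<in> FN N" if "N \<ge> N0" for N
        proof -
          have "\<bar>inner (fl t y) b\<bar> \<le> real N" if b: "b \<in> Basis" for b
          proof -
            have "\<bar>inner (fl t y) b\<bar> \<le> (\<Sum>b\<in>Basis. \<bar>inner (fl t y) b\<bar>)"
              by (rule member_le_sum) (use b in auto)
            also have "\<dots> \<le> real N0" unfolding N0_def by linarith
            also have "\<dots> \<le> real N" using \<open>N \<ge> N0\<close> by simp
            finally show ?thesis .
          qed
          then show ?thesis using True fl_latt by (auto simp: FN_def)
        qed
        then have "eventually (\<lambda>N. gfun \<tau> \<zeta> t y * indicator {y. fl t y \<in> FN N} y = gfun \<tau> \<zeta> t y) sequentially"
          by (auto simp: eventually_sequentially indicator_def)
        then show ?thesis by (rule tendsto_eventually)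
      next
        case False
        then show ?thesis by (simp add: gfun_def)
      qed
    qed
  qed
  have "?I \<le> t ^ DIM('a) * infsum ?E (\<tau> \<inter> latt)"
  proof (rule LIMSEQ_le_const2[OF lim])
    show "\<exists>N0. \<forall>N\<ge>N0. integral\<^sup>L lborel (\<lambda>y. gfun \<tau> \<zeta> t y * indicator {y. fl t y \<in> FN N} y)
               \<le> t ^ DIM('a) * infsum ?E (\<tau> \<inter> latt)"
    proof (intro exI allI impI)
      fix N :: nat
      have "integral\<^sup>L lborel (\<lambda>y. gfun \<tau> \<zeta> t y * indicator {y. fl t y \<in> FN N} y) = t ^ DIM('a) * sum ?E (FN N)"
        by (rule g_cut_integral[OF cl cvx cn c bnd t FNfin]) (auto simp: FN_def)
      also have "\<dots> \<le> t ^ DIM('a) * infsum ?E (\<tau> \<inter> latt)"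
      proof -
        have "infsum ?E (FN N) \<le> infsum ?E (\<tau> \<inter> latt)"
          by (rule infsum_mono_neutral) (use FNfin sm in \<open>auto simp: FN_def\<close>)
        then show ?thesis using tn FNfin by simp
      qed
      finally show "integral\<^sup>L lborel (\<lambda>y. gfun \<tau> \<zeta> t y * indicator {y. fl t y \<in> FN N} y)
               \<le> t ^ DIM('a) * infsum ?E (\<tau> \<inter> latt)" .
    qed
  qed
  then show "t ^ DIM('a) * infsum ?E (\<tau> \<inter> latt) = ?I"
    using up tn by (simp add: field_simps)
qed

end

context
  fixes \<tau> :: "'a::euclidean_space set" and \<zeta> :: 'a and c :: real
  assumes cl: "closed \<tau>" and cvx: "convex \<tau>" and cn: "cone \<tau>" and c: "0 < c"
    and bnd: "\<And>w. w \<in> \<tau> \<Longrightarrow> c * norm w \<le> inner w \<zeta>"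
begin

lemma g_pointwise:
  assumes S: "\<And>n. 0 < S n" "S \<longlonglongrightarrow> 0" and y: "y \<notin> frontier \<tau>"
  shows "(\<lambda>n. gfun \<tau> \<zeta> (S n) y) \<longlonglongrightarrow> indicator \<tau> y * exp (- inner y \<zeta>)"
proof -
  have d0: "(\<lambda>n. y - S n *\<^sub>R fl (S n) y) \<longlonglongrightarrow> 0"
  proof (rule Lim_null_comparison)
    show "\<forall>\<^sub>F n in sequentially. norm (y - S n *\<^sub>R fl (S n) y) \<le> DIM('a) * S n"
      by (intro always_eventually allI fl_approx[OF S(1)])
    show "(\<lambda>n. real DIM('a) * S n) \<longlonglongrightarrow> 0"
      using tendsto_mult_right_zero[OF S(2)] by simp
  qed
  have app: "(\<lambda>n. S n *\<^sub>R fl (S n) y) \<longlonglongrightarrow> y"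
    using tendsto_diff[OF tendsto_const[of y] d0] by simp
  have "y \<in> interior \<tau> \<or> y \<notin> \<tau>"
    using y cl by (auto simp: frontier_def closure_closed)
  then show ?thesis
  proof
    assume yi: "y \<in> interior \<tau>"
    have ev: "eventually (\<lambda>n. S n *\<^sub>R fl (S n) y \<in> interior \<tau>) sequentially"
      by (rule topological_tendstoD[OF app open_interior yi])
    have "eventually (\<lambda>n. exp (- inner (S n *\<^sub>R fl (S n) y) \<zeta>) = gfun \<tau> \<zeta> (S n) y) sequentially"
    proof (rule eventually_mono[OF ev])
      fix n assume n: "S n *\<^sub>R fl (S n) y \<in> interior \<tau>"
      then have zi: "S n *\<^sub>R fl (S n) y \<in> \<tau>" using interior_subset by blast
      have "(1 / S n) *\<^sub>R (S n *\<^sub>R fl (S n) y) \<in> \<tau>"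
        by (rule mem_cone[OF cn zi]) (use S(1)[of n] in simp)
      moreover have "(1 / S n) *\<^sub>R (S n *\<^sub>R fl (S n) y) = fl (S n) y" using S(1)[of n] by simp
      ultimately have "fl (S n) y \<in> \<tau>" by simp
      then show "exp (- inner (S n *\<^sub>R fl (S n) y) \<zeta>) = gfun \<tau> \<zeta> (S n) y"
        by (simp add: gfun_def)
    qed
    moreover have "(\<lambda>n. exp (- inner (S n *\<^sub>R fl (S n) y) \<zeta>)) \<longlonglongrightarrow> exp (- inner y \<zeta>)"
      by (intro tendsto_intros app)
    ultimately have "(\<lambda>n. gfun \<tau> \<zeta> (S n) y) \<longlonglongrightarrow> exp (- inner y \<zeta>)"
      by (rule Lim_transform_eventually[rotated])
    then show ?thesis using yi interior_subset by (auto simp: indicator_def)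
  next
    assume yn: "y \<notin> \<tau>"
    have ev: "eventually (\<lambda>n. S n *\<^sub>R fl (S n) y \<in> - \<tau>) sequentially"
      by (rule topological_tendstoD[OF app]) (use cl yn in \<open>auto simp: open_Compl\<close>)
    have "eventually (\<lambda>n. 0 = gfun \<tau> \<zeta> (S n) y) sequentially"
    proof (rule eventually_mono[OF ev])
      fix n assume n: "S n *\<^sub>R fl (S n) y \<in> - \<tau>"
      have "fl (S n) y \<notin> \<tau>"
      proof
        assume "fl (S n) y \<in> \<tau>"
        then have "S n *\<^sub>R fl (S n) y \<in> \<tau>" using cn S(1)[of n] by (simp add: cone_def)
        then show False using n by auto
      qed
      then show "0 = gfun \<tau> \<zeta> (S n) y" by (simp add: gfun_def)
    qed
    then have "(\<lambda>n. gfun \<tau> \<zeta> (S n) y) \<longlonglongrightarrow> 0"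
      by (rule Lim_transform_eventually[OF tendsto_const])
    then show ?thesis using yn by simp
  qed
qed

lemma frontier_null: "frontier \<tau> \<in> null_sets lborel"
proof -
  have "negligible (frontier \<tau>)" by (rule negligible_convex_frontier[OF cvx])
  then have "frontier \<tau> \<in> null_sets lebesgue" by (simp add: negligible_iff_null_sets)
  moreover have "frontier \<tau> \<in> sets lborel" by (simp add: borel_closed)
  ultimately show ?thesis by (simp add: null_sets_completion_iff)
qed

lemma riemann_limit:
  "((\<lambda>t. t ^ DIM('a) * infsum (\<lambda>w. exp (- t * inner w \<zeta>)) (\<tau> \<inter> latt))
      \<longlongrightarrow> fact DIM('a) * measure lborel {w\<in>\<tau>. inner w \<zeta> \<le> 1}) (at_right 0)"
proof -
  define G where "G y = indicator \<tau> y * exp (- inner y \<zeta>)" for y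
  have Gm: "G \<in> borel_measurable lborel"
    unfolding G_def using tau_borel[OF cl cvx cn c bnd] by measurable
  have lim: "((\<lambda>t. integral\<^sup>L lborel (gfun \<tau> \<zeta> t)) \<longlongrightarrow> integral\<^sup>L lborel G) (at_right 0)"
  proof (rule tendsto_at_right_sequentially[where b=1])
    show "0 < (1::real)" by simp
    fix S :: "nat \<Rightarrow> real" assume S: "\<And>n. 0 < S n" "\<And>n. S n < 1" "decseq S" "S \<longlonglongrightarrow> 0"
    show "(\<lambda>n. integral\<^sup>L lborel (gfun \<tau> \<zeta> (S n))) \<longlonglongrightarrow> integral\<^sup>L lborel G"
    proof (rule integral_dominated_convergence[where w="\<lambda>y. exp (c * DIM('a) * 1) * exp (- (c * norm y))"])
      show "G \<in> borel_measurable lborel" by (rule Gm)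
      show "gfun \<tau> \<zeta> (S n) \<in> borel_measurable lborel" for n
        using g_meas[OF cl cvx cn c bnd] by simp
      show "integrable lborel (\<lambda>y. exp (c * DIM('a) * 1) * exp (- (c * norm (y::'a))))"
        by (rule W_integrable[OF cl cvx cn c bnd])
      show "AE y in lborel. (\<lambda>n. gfun \<tau> \<zeta> (S n) y) \<longlonglongrightarrow> G y"
      proof (rule AE_I'[OF frontier_null])
        show "{y \<in> space lborel. \<not> (\<lambda>n. gfun \<tau> \<zeta> (S n) y) \<longlonglongrightarrow> G y} \<subseteq> frontier \<tau>"
          using g_pointwise[OF S(1) S(4)] by (auto simp: G_def)
      qed
      show "AE y in lborel. norm (gfun \<tau> \<zeta> (S n) y) \<le> exp (c * DIM('a) * 1) * exp (- (c * norm y))" for n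
      proof (rule AE_I2)
        fix y :: 'a
        have "gfun \<tau> \<zeta> (S n) y \<le> exp (c * DIM('a) * S n) * exp (- (c * norm y))"
          by (rule g_bound[OF cl cvx cn c bnd S(1)])
        also have "\<dots> \<le> exp (c * DIM('a) * 1) * exp (- (c * norm y))"
          using S(2)[of n] c by (intro mult_right_mono) (auto intro!: mult_left_mono)
        finally show "norm (gfun \<tau> \<zeta> (S n) y) \<le> exp (c * DIM('a) * 1) * exp (- (c * norm y))"
          using g_nonneg[OF cl cvx cn c bnd] by simp
      qed
    qed
  qed
  have IG: "integral\<^sup>L lborel G = fact DIM('a) * measure lborel {w\<in>\<tau>. inner w \<zeta> \<le> 1}"
  proof -
    have "integral\<^sup>L lborel G = enn2real (\<integral>\<^sup>+y. ennreal (G y) \<partial>lborel)"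
      by (rule integral_eq_nn_integral[OF Gm]) (auto simp: G_def)
    also have "(\<integral>\<^sup>+y. ennreal (G y) \<partial>lborel) = (\<integral>\<^sup>+y. ennreal (exp (- inner y \<zeta>)) * indicator \<tau> y \<partial>lborel)"
      by (rule nn_integral_cong) (auto simp: G_def indicator_def)
    also have "\<dots> = ennreal (fact DIM('a)) * emeasure lborel {w\<in>\<tau>. inner w \<zeta> \<le> 1}"
      by (rule cone_exp_nn_integral[OF cl cn c bnd])
    finally show ?thesis by (simp add: enn2real_mult measure_def)
  qed
  have ev0: "eventually (\<lambda>t::real. 0 < t) (at_right 0)" by (simp add: eventually_at_right_less)
  have "eventually (\<lambda>t. integral\<^sup>L lborel (gfun \<tau> \<zeta> t) = t ^ DIM('a) * infsum (\<lambda>w. exp (- t * inner w \<zeta>)) (\<tau> \<inter> latt)) (at_right 0)"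
    using ev0 by (rule eventually_mono) (metis g_summable_integral(2)[OF cl cvx cn c bnd])
  then show ?thesis
    using Lim_transform_eventually[OF lim[unfolded IG]] by simp
qed

end

lemma dual_cone_eq_INT: "dual_cone A = (\<Inter>v\<in>A. {u. 0 \<le> inner u v})"
  by (auto simp: dual_cone_def)

lemma dual_cone_closed: "closed (dual_cone A)"
  unfolding dual_cone_eq_INT
  by (intro closed_INT ballI closed_Collect_le continuous_intros)

lemma dual_cone_convex: "convex (dual_cone (A::'a::real_inner set))"
  unfolding dual_cone_eq_INT
proof (intro convex_INT ballI)
  fix v :: 'a
  have "{u. 0 \<le> inner u v} = {u. inner v u \<ge> 0}" by (auto simp: inner_commute)
  then show "convex {u. 0 \<le> inner u v}" using convex_halfspace_ge[of 0 v] by simp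
qed

lemma dual_cone_cone: "cone (dual_cone A)"
  by (auto simp: cone_def dual_cone_def)

lemma dual_cone_hull: "dual_cone (convex_cone hull A) = dual_cone A"
proof
  show "dual_cone (convex_cone hull A) \<subseteq> dual_cone A"
    using hull_subset[of A convex_cone] by (auto simp: dual_cone_def)
next
  show "dual_cone A \<subseteq> dual_cone (convex_cone hull A)"
  proof
    fix u assume u: "u \<in> dual_cone A"
    let ?H = "{v. 0 \<le> inner u v}"
    have "convex_cone ?H"
      by (auto simp: convex_cone_iff inner_add_right)
    moreover have "A \<subseteq> ?H" using u by (auto simp: dual_cone_def)
    ultimately have "convex_cone hull A \<subseteq> ?H" by (rule hull_minimal[rotated])
    then show "u \<in> dual_cone (convex_cone hull A)" by (auto simp: dual_cone_def)
  qed
qed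

lemma interior_dual_bound:
  fixes \<sigma> :: "'a::real_inner set"
  assumes "\<xi> \<in> interior \<sigma>"
  obtains c where "0 < c" "\<And>u. u \<in> dual_cone \<sigma> \<Longrightarrow> c * norm u \<le> inner u \<xi>"
proof -
  obtain e where e: "0 < e" "ball \<xi> e \<subseteq> \<sigma>"
    using assms by (auto simp: mem_interior)
  have "(e/2) * norm u \<le> inner u \<xi>" if u: "u \<in> dual_cone \<sigma>" for u
  proof (cases "u = 0")
    case True then show ?thesis by simp
  next
    case False
    let ?v = "\<xi> - ((e/2) / norm u) *\<^sub>R u"
    have "dist \<xi> ?v = e/2" using False e by (simp add: dist_norm)
    then have "?v \<in> \<sigma>" using e by auto
    then have "0 \<le> inner u ?v" using u by (auto simp: dual_cone_def)
    also have "inner u ?v = inner u \<xi> - (e/2) * norm u"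
      using False by (simp add: inner_diff_right power2_norm_eq_inner[symmetric] power2_eq_square)
    finally show ?thesis by simp
  qed
  then show ?thesis using that[of "e/2"] e by auto
qed

lemma hfun_min:
  fixes \<sigma> P :: "(real^'r) set"
  assumes P: "polyhedron_with_tail P \<sigma>" and s0: "0 \<in> \<sigma>" and u: "u \<in> dual_cone \<sigma>"
  shows "\<exists>v0\<in>P. (\<forall>v\<in>P. inner u v0 \<le> inner u v) \<and> hfun P u = inner u v0"
proof -
  obtain V where V: "finite V" "V \<noteq> {}" "P = {p + q | p q. p \<in> convex hull V \<and> q \<in> \<sigma>}"
    using P by (auto simp: polyhedron_with_tail_def)
  obtain v0 where v0: "v0 \<in> V" "\<And>v. v \<in> V \<Longrightarrow> inner u v0 \<le> inner u v"
  proof -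
    let ?m = "Min ((\<lambda>v. inner u v) ` V)"
    have "?m \<in> (\<lambda>v. inner u v) ` V" using V(1,2) by (intro Min_in) auto
    then obtain v0 where "v0 \<in> V" "inner u v0 = ?m" by auto
    moreover have "\<And>v. v \<in> V \<Longrightarrow> ?m \<le> inner u v" using V(1) by (intro Min_le) auto
    ultimately show ?thesis using that by auto
  qed
  have hullge: "convex hull V \<subseteq> {x. inner u x \<ge> inner u v0}"
    by (rule hull_minimal) (use v0 convex_halfspace_ge in auto)
  have v0P: "v0 \<in> P" unfolding V(3)
    using v0(1) s0 hull_inc[of v0 V] by force
  have le: "\<forall>v\<in>P. inner u v0 \<le> inner u v"
  proof
    fix v assume "v \<in> P"
    then obtain p q where pq: "v = p + q" "p \<in> convex hull V" "q \<in> \<sigma>" using V(3) by auto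
    have "0 \<le> inner u q" using u pq(3) by (auto simp: dual_cone_def)
    moreover have "inner u v0 \<le> inner u p" using hullge pq(2) by auto
    ultimately show "inner u v0 \<le> inner u v" using pq(1) by (simp add: inner_add_right)
  qed
  have "hfun P u = inner u v0"
    unfolding hfun_def by (rule cInf_eq_minimum) (use v0P le in auto)
  then show ?thesis using v0P le by blast
qed

lemma floor_sum_bounds:
  fixes x :: "'b \<Rightarrow> real"
  assumes "finite I"
  shows "(\<Sum>i\<in>I. \<lfloor>x i\<rfloor>) \<le> \<lfloor>\<Sum>i\<in>I. x i\<rfloor>"
    and "\<lfloor>\<Sum>i\<in>I. x i\<rfloor> \<le> (\<Sum>i\<in>I. \<lfloor>x i\<rfloor>) + int (card I)"
proof -
  have a: "real_of_int (\<Sum>i\<in>I. \<lfloor>x i\<rfloor>) \<le> (\<Sum>i\<in>I. x i)"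
    by (simp add: sum_mono)
  then show "(\<Sum>i\<in>I. \<lfloor>x i\<rfloor>) \<le> \<lfloor>\<Sum>i\<in>I. x i\<rfloor>" by (simp add: le_floor_iff)
  have "(\<Sum>i\<in>I. x i) \<le> (\<Sum>i\<in>I. real_of_int \<lfloor>x i\<rfloor> + 1)"
    by (intro sum_mono) linarith
  also have "\<dots> = real_of_int ((\<Sum>i\<in>I. \<lfloor>x i\<rfloor>) + int (card I))"
    by (simp add: sum.distrib)
  finally show "\<lfloor>\<Sum>i\<in>I. x i\<rfloor> \<le> (\<Sum>i\<in>I. \<lfloor>x i\<rfloor>) + int (card I)"
    by (simp add: floor_le_iff)
qed

lemma latt_cart: "(latt :: (real^'r) set) = lattice_M"
  by (auto simp: latt_def lattice_M_def int_vec_def Basis_vec_def inner_axis)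

lemma latt_prod: "(latt :: ((real^'r) \<times> real) set) = lattice_MZ"
  by (auto simp: latt_def lattice_MZ_def int_vec_def Basis_prod_def Basis_vec_def inner_axis)

lemma nat_diff_bound: "\<bar>real (nat p) - real (nat q)\<bar> \<le> real_of_int \<bar>p - q\<bar>"
  by (cases "p \<ge> 0"; cases "q \<ge> 0") auto

lemma hfun_cone_zero:
  assumes s0: "0 \<in> \<sigma>" and u: "u \<in> dual_cone \<sigma>"
  shows "hfun \<sigma> u = 0"
  unfolding hfun_def
  by (rule cInf_eq_minimum) (use s0 u in \<open>auto simp: dual_cone_def intro!: image_eqI[where x=0]\<close>)

theorem mainTheorem4:
  fixes \<sigma> :: "(real^'r) set" and D :: "complex option \<Rightarrow> (real^'r) set"
    and y :: "complex option" and \<xi> :: "real^'r"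
  assumes "polyhedral_divisor \<sigma> D" and "proper_pd \<sigma> D" and "\<xi> \<in> interior \<sigma>"
  shows "\<exists>L::real.
     (\<forall>t>0. (\<lambda>u. real (dimR \<sigma> D u) * exp (- t * inner u \<xi>)) summable_on (dual_cone \<sigma> \<inter> lattice_M))
   \<and> (\<forall>t>0. (\<lambda>w. exp (- t * inner w (\<xi>, 0))) summable_on (dual_cone (sigma_y \<sigma> D y) \<inter> lattice_MZ))
   \<and> ((\<lambda>t. t ^ (CARD('r) + 1) * index_char_X \<sigma> D \<xi> t / fact CARD('r)) \<longlongrightarrow> L) (at_right 0)
   \<and> ((\<lambda>t. t ^ (CARD('r) + 1) * index_char_toric (sigma_y \<sigma> D y) (\<xi>, 0) t / fact CARD('r)) \<longlongrightarrow> L) (at_right 0)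
   \<and> L = real (CARD('r) + 1) *
        measure lborel {w \<in> dual_cone (sigma_y \<sigma> D y). inner w (\<xi>, 0) \<le> 1}"
proof -
  have pd: "pointed_rat_cone \<sigma>" "\<And>z. polyhedron_with_tail (D z) \<sigma>" "finite (supp_pd \<sigma> D)"
    using assms(1) by (auto simp: polyhedral_divisor_def)
  obtain S where \<sigma>S: "\<sigma> = convex_cone hull S" using pd(1) by (auto simp: pointed_rat_cone_def)
  have cc\<sigma>: "convex_cone \<sigma>" using \<sigma>S convex_cone_convex_cone_hull by simp
  have s0: "0 \<in> \<sigma>" using cc\<sigma> by (simp add: convex_cone_iff)
  define supp where "supp = supp_pd \<sigma> D"
  have fsupp: "finite supp" using pd(3) by (simp add: supp_def)
  define Ty where "Ty = supp \<inter> - {y}"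
  have fTy: "finite Ty" using fsupp by (simp add: Ty_def)
  define h where "h z u = hfun (D z) u" for z u
  have hmin: "\<And>z u. u \<in> dual_cone \<sigma> \<Longrightarrow> \<exists>v0\<in>D z. (\<forall>v\<in>D z. inner u v0 \<le> inner u v) \<and> h z u = inner u v0"
    unfolding h_def by (rule hfun_min[OF pd(2) s0])
  have hle: "\<And>z u v. u \<in> dual_cone \<sigma> \<Longrightarrow> v \<in> D z \<Longrightarrow> h z u \<le> inner u v"
    using hmin by fastforce
  have hatt: "\<And>z u. u \<in> dual_cone \<sigma> \<Longrightarrow> \<exists>v\<in>D z. inner u v = h z u"
  proof -
    fix z u assume "u \<in> dual_cone \<sigma>"
    then obtain v0 where "v0 \<in> D z" "h z u = inner u v0" using hmin by blast
    then show "\<exists>v\<in>D z. inner u v = h z u" by auto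
  qed
  define MS where "MS = msum_pd \<sigma> D (- {y})"
  have MSeq: "MS = {v + (\<Sum>z\<in>Ty. f z) | v f. v \<in> \<sigma> \<and> (\<forall>z\<in>Ty. f z \<in> D z)}"
    by (simp add: MS_def msum_pd_def Ty_def supp_def)
  define H where "H u = (\<Sum>z\<in>Ty. h z u)" for u
  have MSle: "\<And>u v. u \<in> dual_cone \<sigma> \<Longrightarrow> v \<in> MS \<Longrightarrow> H u \<le> inner u v"
  proof -
    fix u v assume u: "u \<in> dual_cone \<sigma>" and v: "v \<in> MS"
    then obtain v0 f where vf: "v = v0 + (\<Sum>z\<in>Ty. f z)" "v0 \<in> \<sigma>" "\<forall>z\<in>Ty. f z \<in> D z"
      unfolding MSeq by auto
    have "0 \<le> inner u v0" using u vf(2) by (auto simp: dual_cone_def)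
    moreover have "H u \<le> (\<Sum>z\<in>Ty. inner u (f z))"
      unfolding H_def by (rule sum_mono) (use hle u vf(3) in auto)
    ultimately show "H u \<le> inner u v"
      using vf(1) by (simp add: inner_add_right inner_sum_right)
  qed
  have MSatt: "\<And>u. u \<in> dual_cone \<sigma> \<Longrightarrow> \<exists>v\<in>MS. inner u v = H u"
  proof -
    fix u assume u: "u \<in> dual_cone \<sigma>"
    have "\<forall>z. \<exists>v. v \<in> D z \<and> inner u v = h z u" using hatt[OF u] by blast
    then obtain f where f: "\<And>z. f z \<in> D z \<and> inner u (f z) = h z u" by metis
    have "0 + (\<Sum>z\<in>Ty. f z) \<in> MS" unfolding MSeq using s0 f by blast
    moreover have "inner u (0 + (\<Sum>z\<in>Ty. f z)) = H u"
      using f by (simp add: H_def inner_sum_right)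
    ultimately show "\<exists>v\<in>MS. inner u v = H u" by blast
  qed
  have d0: "(0::real^'r) \<in> dual_cone \<sigma>" by (simp add: dual_cone_def)
  obtain v1 where v1: "v1 \<in> D y" using hatt[OF d0] by blast
  obtain v2 where v2: "v2 \<in> MS" using MSatt[OF d0] by blast
  define \<tau> where "\<tau> = dual_cone (sigma_y \<sigma> D y)"
  have \<tau>char: "\<And>u k. (u, k) \<in> \<tau> \<longleftrightarrow> u \<in> dual_cone \<sigma> \<and> (\<forall>v\<in>D y. 0 \<le> inner u v + k) \<and> (\<forall>v\<in>MS. 0 \<le> inner u v - k)"
    unfolding \<tau>_def sigma_y_def dual_cone_hull MS_def
    by (auto simp: dual_cone_def ball_Un)
  have \<tau>char2: "\<And>u k. (u, k) \<in> \<tau> \<longleftrightarrow> u \<in> dual_cone \<sigma> \<and> - h y u \<le> k \<and> k \<le> H u"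
  proof -
    fix u k
    show "(u, k) \<in> \<tau> \<longleftrightarrow> u \<in> dual_cone \<sigma> \<and> - h y u \<le> k \<and> k \<le> H u"
    proof
      assume a: "(u, k) \<in> \<tau>"
      then have u: "u \<in> dual_cone \<sigma>" using \<tau>char by blast
      obtain va where "va \<in> D y" "inner u va = h y u" using hatt[OF u] by blast
      moreover obtain vb where "vb \<in> MS" "inner u vb = H u" using MSatt[OF u] by blast
      ultimately show "u \<in> dual_cone \<sigma> \<and> - h y u \<le> k \<and> k \<le> H u"
        using a u \<tau>char by fastforce
    next
      assume a: "u \<in> dual_cone \<sigma> \<and> - h y u \<le> k \<and> k \<le> H u"
      then show "(u, k) \<in> \<tau>"
        unfolding \<tau>char using hle[of u] MSle[of u] by fastforce
    qed
  qed
  obtain c where c: "0 < c" "\<And>u. u \<in> dual_cone \<sigma> \<Longrightarrow> c * norm u \<le> inner u \<xi>"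
    using interior_dual_bound[OF assms(3)] by blast
  define C where "C = norm v1 + norm v2"
  have C0: "0 \<le> C" by (simp add: C_def)
  have kb: "\<And>u k. (u, k) \<in> \<tau> \<Longrightarrow> \<bar>k\<bar> \<le> C * norm u"
  proof -
    fix u k assume uk: "(u, k) \<in> \<tau>"
    have "0 \<le> inner u v1 + k" "0 \<le> inner u v2 - k" using uk v1 v2 \<tau>char by auto
    moreover have "inner u v1 \<le> norm u * norm v1" "inner u v2 \<le> norm u * norm v2"
      by (simp_all add: norm_cauchy_schwarz)
    ultimately show "\<bar>k\<bar> \<le> C * norm u" unfolding C_def
      by (smt (verit, best) mult.commute mult_nonneg_nonneg norm_ge_zero distrib_left)
  qed
  define c' where "c' = c / (1 + C)"
  have c'0: "0 < c'" using c C0 by (simp add: c'_def)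
  have bnd\<tau>: "\<And>w. w \<in> \<tau> \<Longrightarrow> c' * norm w \<le> inner w (\<xi>, 0)"
  proof -
    fix w assume w: "w \<in> \<tau>"
    obtain u k where wuk: "w = (u, k)" by (cases w)
    have u: "u \<in> dual_cone \<sigma>" using w wuk \<tau>char by blast
    have "norm w \<le> norm u + \<bar>k\<bar>" using norm_Pair_le[of u k] wuk by simp
    also have "\<dots> \<le> (1 + C) * norm u" using kb[of u k] w wuk by (simp add: algebra_simps)
    finally have "c' * norm w \<le> c' * ((1 + C) * norm u)" using c'0 by (intro mult_left_mono) auto
    also have "\<dots> = c * norm u" using C0 by (simp add: c'_def)
    also have "\<dots> \<le> inner u \<xi>" by (rule c(2)[OF u])
    finally show "c' * norm w \<le> inner w (\<xi>, 0)" using wuk by simp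
  qed
  have \<tau>cl: "closed \<tau>" "convex \<tau>" "cone \<tau>"
    unfolding \<tau>_def by (simp_all add: dual_cone_closed dual_cone_convex dual_cone_cone)
  have \<sigma>cl: "closed (dual_cone \<sigma>)" "convex (dual_cone \<sigma>)" "cone (dual_cone \<sigma>)"
    by (simp_all add: dual_cone_closed dual_cone_convex dual_cone_cone)
  have tor_sum: "\<And>t. 0 < t \<Longrightarrow> (\<lambda>w. exp (- t * inner w (\<xi>, 0))) summable_on (\<tau> \<inter> lattice_MZ)"
    using g_summable_integral(1)[OF \<tau>cl c'0 bnd\<tau>] by (simp add: latt_prod)
  have tor_lim: "((\<lambda>t. t ^ (CARD('r) + 1) * infsum (\<lambda>w. exp (- t * inner w (\<xi>, 0))) (\<tau> \<inter> lattice_MZ))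
      \<longlongrightarrow> fact (CARD('r) + 1) * measure lborel {w\<in>\<tau>. inner w (\<xi>, 0) \<le> 1}) (at_right 0)"
    using riemann_limit[OF \<tau>cl c'0 bnd\<tau>] by (simp add: latt_prod)
  have sig_sum: "\<And>t. 0 < t \<Longrightarrow> (\<lambda>u. exp (- t * inner u \<xi>)) summable_on (dual_cone \<sigma> \<inter> lattice_M)"
    using g_summable_integral(1)[OF \<sigma>cl c(1) c(2)] by (simp add: latt_cart)
  have sig_lim: "((\<lambda>t. t ^ CARD('r) * infsum (\<lambda>u. exp (- t * inner u \<xi>)) (dual_cone \<sigma> \<inter> lattice_M))
      \<longlongrightarrow> fact CARD('r) * measure lborel {w\<in>dual_cone \<sigma>. inner w \<xi> \<le> 1}) (at_right 0)"
    using riemann_limit[OF \<sigma>cl c(1) c(2)] by (simp add: latt_cart)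
  define A where "A = dual_cone \<sigma> \<inter> lattice_M"
  define K where "K u = {k::real. k \<in> \<int> \<and> (u, k) \<in> \<tau>}" for u
  have SigmaEq: "\<tau> \<inter> lattice_MZ = Sigma A K"
    using \<tau>char2 by (auto simp: A_def K_def lattice_MZ_def lattice_M_def)
  have Keq: "\<And>u. u \<in> A \<Longrightarrow> K u = real_of_int ` {- \<lfloor>h y u\<rfloor> .. \<lfloor>H u\<rfloor>}"
  proof -
    fix u assume u: "u \<in> A"
    then have ud: "u \<in> dual_cone \<sigma>" by (simp add: A_def)
    show "K u = real_of_int ` {- \<lfloor>h y u\<rfloor> .. \<lfloor>H u\<rfloor>}"
    proof (intro set_eqI iffI)
      fix k assume "k \<in> K u"
      then obtain j where j: "k = of_int j" "- h y u \<le> of_int j" "of_int j \<le> H u"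
        using \<tau>char2 ud by (auto simp: K_def elim!: Ints_cases)
      have "- j \<le> \<lfloor>h y u\<rfloor>" using j(2) by (subst le_floor_iff) simp
      then have "- \<lfloor>h y u\<rfloor> \<le> j" by linarith
      moreover have "j \<le> \<lfloor>H u\<rfloor>" using j(3) by (simp add: le_floor_iff)
      ultimately show "k \<in> real_of_int ` {- \<lfloor>h y u\<rfloor> .. \<lfloor>H u\<rfloor>}" using j(1) by auto
    next
      fix k assume "k \<in> real_of_int ` {- \<lfloor>h y u\<rfloor> .. \<lfloor>H u\<rfloor>}"
      then obtain j where j: "k = of_int j" "- \<lfloor>h y u\<rfloor> \<le> j" "j \<le> \<lfloor>H u\<rfloor>" by auto
      have "- h y u \<le> of_int j" using j(2) by linarith
      moreover have "of_int j \<le> H u" using j(3) by linarith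
      ultimately show "k \<in> K u" using j(1) ud \<tau>char2 by (auto simp: K_def)
    qed
  qed
  have Kfin: "\<And>u. u \<in> A \<Longrightarrow> finite (K u)" using Keq by simp
  have Kcard: "\<And>u. u \<in> A \<Longrightarrow> card (K u) = nat (\<lfloor>H u\<rfloor> + \<lfloor>h y u\<rfloor> + 1)"
  proof -
    fix u assume u: "u \<in> A"
    have "card (K u) = card {- \<lfloor>h y u\<rfloor> .. \<lfloor>H u\<rfloor>}"
      unfolding Keq[OF u] by (rule card_image) (simp add: inj_on_def)
    then show "card (K u) = nat (\<lfloor>H u\<rfloor> + \<lfloor>h y u\<rfloor> + 1)" by simp
  qed
  define B where "B = real (card supp)"
  have B0: "0 \<le> B" by (simp add: B_def)
  have abd: "\<And>u. u \<in> A \<Longrightarrow> \<bar>real (dimR \<sigma> D u) - real (card (K u))\<bar> \<le> B"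
  proof -
    fix u assume u: "u \<in> A"
    then have ud: "u \<in> dual_cone \<sigma>" by (simp add: A_def)
    define s where "s = (\<Sum>z\<in>Ty. \<lfloor>h z u\<rfloor>)"
    have fb: "s \<le> \<lfloor>H u\<rfloor>" "\<lfloor>H u\<rfloor> \<le> s + int (card Ty)"
      unfolding s_def H_def using floor_sum_bounds[OF fTy, of "\<lambda>z. h z u"] by auto
    have cTy: "card Ty \<le> card supp" unfolding Ty_def by (rule card_mono[OF fsupp]) auto
    have dimeq: "dimR \<sigma> D u = nat (s + \<lfloor>h y u\<rfloor> + 1)"
    proof (cases "y \<in> supp")
      case True
      have "(\<Sum>z\<in>supp. \<lfloor>h z u\<rfloor>) = \<lfloor>h y u\<rfloor> + s"
        unfolding s_def Ty_def using True fsupp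
        by (simp add: sum.remove Diff_eq[symmetric])
      then show ?thesis by (simp add: dimR_def h_def[symmetric] supp_def[symmetric] algebra_simps)
    next
      case False
      then have "D y = \<sigma>" by (simp add: supp_def supp_pd_def)
      then have "h y u = 0" using hfun_cone_zero[OF s0 ud] by (simp add: h_def)
      moreover have "Ty = supp" using False by (auto simp: Ty_def)
      ultimately show ?thesis by (simp add: dimR_def h_def[symmetric] supp_def[symmetric] s_def)
    qed
    have "\<bar>real (dimR \<sigma> D u) - real (card (K u))\<bar> \<le> real_of_int \<bar>(s + \<lfloor>h y u\<rfloor> + 1) - (\<lfloor>H u\<rfloor> + \<lfloor>h y u\<rfloor> + 1)\<bar>"
      unfolding dimeq Kcard[OF u] by (rule nat_diff_bound)
    also have "\<dots> \<le> B" using fb cTy by (simp add: B_def)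
    finally show "\<bar>real (dimR \<sigma> D u) - real (card (K u))\<bar> \<le> B" .
  qed
  have main: "\<And>t. 0 < t \<Longrightarrow>
      (\<lambda>u. real (dimR \<sigma> D u) * exp (- t * inner u \<xi>)) summable_on A
    \<and> infsum (\<lambda>w. exp (- t * inner w (\<xi>, 0))) (\<tau> \<inter> lattice_MZ) = infsum (\<lambda>u. real (card (K u)) * exp (- t * inner u \<xi>)) A
    \<and> \<bar>infsum (\<lambda>u. real (dimR \<sigma> D u) * exp (- t * inner u \<xi>)) A
        - infsum (\<lambda>u. real (card (K u)) * exp (- t * inner u \<xi>)) A\<bar>
       \<le> B * infsum (\<lambda>u. exp (- t * inner u \<xi>)) A"
  proof -
    fix t :: real assume t: "0 < t"
    let ?e = "\<lambda>u. exp (- t * inner u \<xi>)"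
    let ?a = "\<lambda>u. real (dimR \<sigma> D u) * ?e u"
    let ?b = "\<lambda>u. real (card (K u)) * ?e u"
    let ?f = "\<lambda>u k. exp (- t * inner (u, k) (\<xi>, 0))"
    have feq: "(\<lambda>(u, k). ?f u k) = (\<lambda>w. exp (- t * inner w (\<xi>, 0)))"
      by (simp add: case_prod_unfold inner_Pair_0)
    have fsum: "(\<lambda>(u, k). ?f u k) summable_on (Sigma A K)"
      using tor_sum[OF t] unfolding SigmaEq[symmetric] feq .
    have inner_eq: "\<And>u. u \<in> A \<Longrightarrow> infsum (?f u) (K u) = ?b u"
      using Kfin by simp
    have bsum: "?b summable_on A"
      using summable_on_Sigma_banach[OF fsum] inner_eq by (simp cong: summable_on_cong)
    have beq: "infsum (\<lambda>w. exp (- t * inner w (\<xi>, 0))) (\<tau> \<inter> lattice_MZ) = infsum ?b A"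
    proof -
      have "infsum ?b A = infsum (\<lambda>u. infsum (?f u) (K u)) A"
        using inner_eq by (intro infsum_cong) simp
      also have "\<dots> = infsum (\<lambda>(u, k). ?f u k) (Sigma A K)"
        by (rule infsum_Sigma'_banach[OF fsum])
      also have "\<dots> = infsum (\<lambda>w. exp (- t * inner w (\<xi>, 0))) (\<tau> \<inter> lattice_MZ)"
        unfolding SigmaEq[symmetric] feq ..
      finally show ?thesis by simp
    qed
    have esum: "?e summable_on A" using sig_sum[OF t] by (simp add: A_def)
    have Besum: "(\<lambda>u. B * ?e u) summable_on A" by (rule summable_on_cmult_right[OF esum])
    have asum: "?a summable_on A"
    proof (rule summable_on_comparison_test[OF summable_on_add[OF bsum Besum]])
      fix u assume u: "u \<in> A"
      have "real (dimR \<sigma> D u) \<le> real (card (K u)) + B" using abd[OF u] by linarith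
      then show "?a u \<le> ?b u + B * ?e u"
        by (simp add: distrib_right[symmetric] mult_right_mono)
      show "0 \<le> ?a u" by simp
    qed
    define d where "d u = ?a u + - ?b u" for u
    have dsum: "d summable_on A" unfolding d_def
      by (rule summable_on_add[OF asum summable_on_uminus[THEN iffD2, OF bsum]])
    have deq: "infsum d A = infsum ?a A - infsum ?b A"
    proof -
      have "infsum d A = infsum ?a A + infsum (\<lambda>u. - ?b u) A"
        unfolding d_def by (rule infsum_add[OF asum summable_on_uminus[THEN iffD2, OF bsum]])
      also have "infsum (\<lambda>u. - ?b u) A = - infsum ?b A" by (rule infsum_uminus)
      finally show ?thesis by simp
    qed
    have dle: "infsum d A \<le> infsum (\<lambda>u. B * ?e u) A"
    proof (rule infsum_mono[OF dsum Besum])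
      fix u assume u: "u \<in> A"
      have "real (dimR \<sigma> D u) - real (card (K u)) \<le> B" using abd[OF u] by linarith
      then show "d u \<le> B * ?e u" unfolding d_def
        by (simp add: left_diff_distrib[symmetric] mult_right_mono)
    qed
    have dge: "infsum (\<lambda>u. - (B * ?e u)) A \<le> infsum d A"
    proof (rule infsum_mono[OF summable_on_uminus[THEN iffD2, OF Besum] dsum])
      fix u assume u: "u \<in> A"
      have "- B \<le> real (dimR \<sigma> D u) - real (card (K u))" using abd[OF u] by linarith
      then have "- B * ?e u \<le> (real (dimR \<sigma> D u) - real (card (K u))) * ?e u"
        by (rule mult_right_mono) simp
      then show "- (B * ?e u) \<le> d u" unfolding d_def
        by (simp add: left_diff_distrib)
    qed
    have "infsum (\<lambda>u. B * ?e u) A = B * infsum ?e A" by (rule infsum_cmult_right')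
    moreover have "infsum (\<lambda>u. - (B * ?e u)) A = - (B * infsum ?e A)"
      by (simp add: infsum_uminus infsum_cmult_right')
    ultimately have "\<bar>infsum ?a A - infsum ?b A\<bar> \<le> B * infsum ?e A"
      using dle dge deq by linarith
    then show "?a summable_on A \<and> infsum (\<lambda>w. exp (- t * inner w (\<xi>, 0))) (\<tau> \<inter> lattice_MZ) = infsum ?b A
      \<and> \<bar>infsum ?a A - infsum ?b A\<bar> \<le> B * infsum ?e A"
      using asum beq by blast
  qed
  define P where "P = {w \<in> dual_cone (sigma_y \<sigma> D y). inner w (\<xi>, 0) \<le> 1}"
  define L where "L = real (CARD('r) + 1) * measure lborel P"
  define T where "T t = infsum (\<lambda>u. real (card (K u)) * exp (- t * inner u \<xi>)) A" for t
  define X where "X t = infsum (\<lambda>u. real (dimR \<sigma> D u) * exp (- t * inner u \<xi>)) A" for t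
  define E where "E t = infsum (\<lambda>u. exp (- t * inner u \<xi>)) A" for t
  have ev0: "eventually (\<lambda>t::real. 0 < t) (at_right 0)" by (simp add: eventually_at_right_less)
  have Tlim: "((\<lambda>t. t ^ (CARD('r) + 1) * T t / fact CARD('r)) \<longlongrightarrow> L) (at_right 0)"
  proof -
    have l1: "((\<lambda>t. t ^ (CARD('r) + 1) * infsum (\<lambda>w. exp (- t * inner w (\<xi>, 0))) (\<tau> \<inter> lattice_MZ) / fact CARD('r))
        \<longlongrightarrow> fact (CARD('r) + 1) * measure lborel P / fact CARD('r)) (at_right 0)"
      using tendsto_divide[OF tor_lim tendsto_const[of "fact CARD('r)"]] by (simp add: P_def \<tau>_def)
    have l2: "fact (CARD('r) + 1) * measure lborel P / fact CARD('r) = L"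
      by (simp add: L_def)
    have l3: "eventually (\<lambda>t. t ^ (CARD('r) + 1) * infsum (\<lambda>w. exp (- t * inner w (\<xi>, 0))) (\<tau> \<inter> lattice_MZ) / fact CARD('r)
        = t ^ (CARD('r) + 1) * T t / fact CARD('r)) (at_right 0)"
      using ev0 by (rule eventually_mono) (use main in \<open>simp add: T_def\<close>)
    show ?thesis using Lim_transform_eventually[OF l1[unfolded l2] l3] .
  qed
  have Dlim: "((\<lambda>t. t ^ (CARD('r) + 1) * (X t - T t) / fact CARD('r)) \<longlongrightarrow> 0) (at_right 0)"
  proof (rule Lim_null_comparison)
    show "eventually (\<lambda>t. norm (t ^ (CARD('r) + 1) * (X t - T t) / fact CARD('r))
        \<le> B * t * (t ^ CARD('r) * E t) / fact CARD('r)) (at_right 0)"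
    proof (rule eventually_mono[OF ev0])
      fix t :: real assume t: "0 < t"
      have "\<bar>X t - T t\<bar> \<le> B * E t" using main[OF t] by (simp add: X_def T_def E_def A_def)
      have tp: "0 < t ^ (CARD('r) + 1)" using t by simp
      have "norm (t ^ (CARD('r) + 1) * (X t - T t) / fact CARD('r))
          = t ^ (CARD('r) + 1) * \<bar>X t - T t\<bar> / fact CARD('r)"
        using tp by (simp only: real_norm_def abs_divide abs_mult abs_of_pos) simp
      also have "\<dots> \<le> t ^ (CARD('r) + 1) * (B * E t) / fact CARD('r)"
        by (intro divide_right_mono mult_left_mono) (use \<open>\<bar>X t - T t\<bar> \<le> B * E t\<close> tp in auto)
      also have "\<dots> = B * t * (t ^ CARD('r) * E t) / fact CARD('r)"
        by (simp add: algebra_simps)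
      finally show "norm (t ^ (CARD('r) + 1) * (X t - T t) / fact CARD('r))
        \<le> B * t * (t ^ CARD('r) * E t) / fact CARD('r)" .
    qed
    have "((\<lambda>t. B * t * (t ^ CARD('r) * E t) / fact CARD('r)) \<longlongrightarrow>
        B * 0 * (fact CARD('r) * measure lborel {w\<in>dual_cone \<sigma>. inner w \<xi> \<le> 1}) / fact CARD('r)) (at_right 0)"
      by (intro tendsto_intros sig_lim[unfolded A_def[symmetric] E_def[symmetric]]) simp
    then show "((\<lambda>t. B * t * (t ^ CARD('r) * E t) / fact CARD('r)) \<longlongrightarrow> 0) (at_right 0)" by simp
  qed
  have Xlim: "((\<lambda>t. t ^ (CARD('r) + 1) * X t / fact CARD('r)) \<longlongrightarrow> L) (at_right 0)"
  proof -
    have "((\<lambda>t. t ^ (CARD('r) + 1) * T t / fact CARD('r) + t ^ (CARD('r) + 1) * (X t - T t) / fact CARD('r)) \<longlongrightarrow> L + 0) (at_right 0)"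
      by (rule tendsto_add[OF Tlim Dlim])
    then show ?thesis by (simp add: field_simps)
  qed
  show ?thesis
  proof (intro exI conjI allI impI)
    fix t :: real assume t: "0 < t"
    show "(\<lambda>u. real (dimR \<sigma> D u) * exp (- t * inner u \<xi>)) summable_on (dual_cone \<sigma> \<inter> lattice_M)"
      using main[OF t] by (simp add: A_def)
  next
    fix t :: real assume t: "0 < t"
    show "(\<lambda>w. exp (- t * inner w (\<xi>, 0))) summable_on (dual_cone (sigma_y \<sigma> D y) \<inter> lattice_MZ)"
      using tor_sum[OF t] by (simp add: \<tau>_def)
  next
    show "((\<lambda>t. t ^ (CARD('r) + 1) * index_char_X \<sigma> D \<xi> t / fact CARD('r)) \<longlongrightarrow> L) (at_right 0)"
      using Xlim by (simp add: index_char_X_def X_def A_def)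
  next
    show "((\<lambda>t. t ^ (CARD('r) + 1) * index_char_toric (sigma_y \<sigma> D y) (\<xi>, 0) t / fact CARD('r)) \<longlongrightarrow> L) (at_right 0)"
    proof -
      have "eventually (\<lambda>t. t ^ (CARD('r) + 1) * T t / fact CARD('r)
          = t ^ (CARD('r) + 1) * index_char_toric (sigma_y \<sigma> D y) (\<xi>, 0) t / fact CARD('r)) (at_right 0)"
        using ev0 by (rule eventually_mono) (use main in \<open>simp add: T_def index_char_toric_def \<tau>_def\<close>)
      then show ?thesis by (rule Lim_transform_eventually[OF Tlim])
    qed
  next
    show "L = real (CARD('r) + 1) * measure lborel {w \<in> dual_cone (sigma_y \<sigma> D y). inner w (\<xi>, 0) \<le> 1}"
      by (simp add: L_def P_def)
  qed
qed

end
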